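(* Let $k>500$, $\ln^3k/\sqrt k<\delta<1/100$, $d=300\lceil\ln k\rceil$, $\varepsilon=50\delta/\lceil\ln k\rceil$, and let $c^1,\dots,c^k$ be sampled independently and uniformly from the grid $G$, with data set $X$ as in the context. Then with probability at least $1-1/k$ the following holds: for every path $\pi$ of length at most $\log_2k/4$, either (a) $|F_{u(\pi)}|\le\sqrt k$, or (b) every threshold cut $(i,\xi)$ that separates at least two data points of $X\cap u(\pi)$ damages at least $\varepsilon|F_{u(\pi)}|/2$ centers of $F_{u(\pi)}$.
   Context: $G$ is the set of points of $[0,1]^d$ all of whose coordinates are nonnegative integer multiples of $\varepsilon$; $\mathbf{1}=(1,\dots,1)\in\mathbb{R}^d$. The data set (multiset) $X$ consists, for each $i$, of $k^2\lceil\ln^3k\rceil$ copies of $c^i$ together with the two points $c^i+\varepsilon\mathbf{1}$ and $c^i-\varepsilon\mathbf{1}$. A path $\pi$ is a finite sequence of triples $(i_j,\xi_j,\lambda_j)$ with $i_j\in\{1,\dots,d\}$, $\xi_j\in\mathbb{R}$, $\lambda_j\in\{\pm1\}$; its length is the number of triples; $u(\pi)$ is the set of $y\in\mathbb{R}^d$ such that for each $j$, $y_{i_j}\le\xi_j$ if $\lambda_j=-1$ and $y_{i_j}>\xi_j$ if $\lambda_j=+1$. A center $c^i\in u(\pi)$ is damaged in $u(\pi)$ if $c^i+\varepsilon\mathbf{1}\notin u(\pi)$ or $c^i-\varepsilon\mathbf{1}\notin u(\pi)$; $F_{u(\pi)}$ is the set (indexed by $i$) of centers $c^i\in u(\pi)$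 that are not damaged in $u(\pi)$. A threshold cut $(i,\xi)$ separates two points if exactly one of them satisfies $y_i\le\xi$; it damages a center $c$ if it separates $c$ from $c+\varepsilon\mathbf 1$ or from $c-\varepsilon\mathbf 1$. *)

theory Defs
  imports "HOL-Probability.Probability" "HOL-Library.Multiset"
begin

text \<open>Points of R^d are modelled as functions nat => real; only coordinates 0..d-1 matter
  (coordinate i of the paper corresponds to index i-1 here).\<close>

definition grid :: "nat \<Rightarrow> real \<Rightarrow> (nat \<Rightarrow> real) set" where
  "grid d eps = {y. (\<forall>i<d. (\<exists>j::nat. y i = real j * eps) \<and> 0 \<le> y i \<and> y i \<le> 1)
                    \<and> (\<forall>i. d \<le> i \<longrightarrow> y i = 0)}"

definition shift :: "nat \<Rightarrow> real \<Rightarrow> real \<Rightarrow> (nat \<Rightarrow> real) \<Rightarrow> (nat \<Rightarrow> real)" where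
  "shift d eps s c = (\<lambda>i. if i < d then c i + s * eps else c i)"

type_synonym path = "(nat \<times> real \<times> int) list"

definition valid_path :: "nat \<Rightarrow> path \<Rightarrow> bool" where
  "valid_path d \<pi> = (\<forall>(i, \<xi>, l) \<in> set \<pi>. i < d \<and> (l = -1 \<or> l = 1))"

definition cell :: "path \<Rightarrow> (nat \<Rightarrow> real) set" where
  "cell \<pi> = {y. \<forall>(i, \<xi>, l) \<in> set \<pi>. (l = -1 \<longrightarrow> y i \<le> \<xi>) \<and> (l = 1 \<longrightarrow> y i > \<xi>)}"

definition separates :: "nat \<Rightarrow> real \<Rightarrow> (nat \<Rightarrow> real) \<Rightarrow> (nat \<Rightarrow> real) \<Rightarrow> bool" where
  "separates i \<xi> x y = ((x i \<le> \<xi>) \<noteq> (y i \<le> \<xi>))"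

definition damages :: "nat \<Rightarrow> real \<Rightarrow> nat \<Rightarrow> real \<Rightarrow> (nat \<Rightarrow> real) \<Rightarrow> bool" where
  "damages d eps i \<xi> c = (separates i \<xi> c (shift d eps 1 c) \<or> separates i \<xi> c (shift d eps (-1) c))"

definition damaged_in :: "nat \<Rightarrow> real \<Rightarrow> (nat \<Rightarrow> real) set \<Rightarrow> (nat \<Rightarrow> real) \<Rightarrow> bool" where
  "damaged_in d eps U c = (shift d eps 1 c \<notin> U \<or> shift d eps (-1) c \<notin> U)"

definition F_idx :: "nat \<Rightarrow> real \<Rightarrow> nat \<Rightarrow> (nat \<Rightarrow> nat \<Rightarrow> real) \<Rightarrow> (nat \<Rightarrow> real) set \<Rightarrow> nat set" where
  "F_idx d eps k c U = {j. j < k \<and> c j \<in> U \<and> \<not> damaged_in d eps U (c j)}"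

definition dataset :: "nat \<Rightarrow> real \<Rightarrow> nat \<Rightarrow> (nat \<Rightarrow> nat \<Rightarrow> real) \<Rightarrow> (nat \<Rightarrow> real) multiset" where
  "dataset d eps k c = (\<Sum>j<k. replicate_mset (k^2 * nat \<lceil>(ln (real k))^3\<rceil>) (c j)
                             + {# shift d eps 1 (c j), shift d eps (-1) (c j) #})"

end

theory Submission
  imports Defs
begin


lemma grid_coord:
  assumes "y \<in> grid d eps" "i < d" "eps > 0"
  shows "\<exists>j. j \<le> nat \<lfloor>1/eps\<rfloor> \<and> y i = real j * eps"
proof -
  from assms obtain j :: nat where j: "y i = real j * eps" "y i \<le> 1" unfolding grid_def by blast
  have "real j \<le> 1/eps" using j assms(3) by (simp add: field_simps)
  hence "int j \<le> \<lfloor>1/eps\<rfloor>" by (simp add: le_floor_iff)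
  hence "j \<le> nat \<lfloor>1/eps\<rfloor>" by linarith
  thus ?thesis using j by blast
qed

lemma grid_out: "y \<in> grid d eps \<Longrightarrow> d \<le> i \<Longrightarrow> y i = 0"
  unfolding grid_def by blast

lemma grid_subset:
  assumes "eps > 0"
  shows "grid d eps \<subseteq> (\<lambda>f i. if i < d then f i else 0) ` PiE {..<d} (\<lambda>_. (\<lambda>j. real j * eps) ` {..nat \<lfloor>1/eps\<rfloor>})"
proof
  fix y assume y: "y \<in> grid d eps"
  let ?f = "restrict y {..<d}"
  have "?f \<in> PiE {..<d} (\<lambda>_. (\<lambda>j. real j * eps) ` {..nat \<lfloor>1/eps\<rfloor>})"
    using grid_coord[OF y _ assms] by (auto simp: PiE_iff)
  moreover have "y = (\<lambda>i. if i < d then ?f i else 0)"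
    using grid_out[OF y] by (auto simp: fun_eq_iff)
  ultimately show "y \<in> (\<lambda>f i. if i < d then f i else 0) ` PiE {..<d} (\<lambda>_. (\<lambda>j. real j * eps) ` {..nat \<lfloor>1/eps\<rfloor>})"
    by blast
qed

lemma finite_grid: "eps > 0 \<Longrightarrow> finite (grid d eps)"
  by (rule finite_subset[OF grid_subset]) (auto intro!: finite_PiE)

lemma zero_grid: "(\<lambda>_. 0) \<in> grid d eps"
  unfolding grid_def by auto

lemma grid_upd:
  assumes "x \<in> grid d eps" "i < d" "w \<le> nat \<lfloor>1/eps\<rfloor>" "eps > 0"
  shows "x(i := real w * eps) \<in> grid d eps"
proof -
  have "0 \<le> \<lfloor>1/eps\<rfloor>" using assms(4) by simp
  hence "int w \<le> \<lfloor>1/eps\<rfloor>" using assms(3) by linarith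
  hence "real w \<le> 1/eps" by (simp add: le_floor_iff)
  hence "real w * eps \<le> 1" using assms(4) by (simp add: field_simps)
  thus ?thesis using assms unfolding grid_def by auto
qed



lemma slice_card:
  assumes eps: "eps > 0" and i: "i < d" and w: "w \<le> nat \<lfloor>1/eps\<rfloor>"
    and inv: "\<And>x z. A (x(i:=z)) = A x"
  shows "card {x\<in>grid d eps. A x \<and> x i = real w * eps} = card {x\<in>grid d eps. A x \<and> x i = 0}"
proof -
  have "bij_betw (\<lambda>x. x(i := 0)) {x\<in>grid d eps. A x \<and> x i = real w * eps} {x\<in>grid d eps. A x \<and> x i = 0}"
  proof (rule bij_betw_byWitness[where f'="\<lambda>x. x(i := real w * eps)"])
    show "\<forall>a\<in>{x \<in> grid d eps. A x \<and> x i = real w * eps}. (a(i := 0))(i := real w * eps) = a"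
      by auto
    show "\<forall>a'\<in>{x \<in> grid d eps. A x \<and> x i = 0}. (a'(i := real w * eps))(i := 0) = a'"
      by auto
    show "(\<lambda>x. x(i := 0)) ` {x \<in> grid d eps. A x \<and> x i = real w * eps} \<subseteq> {x \<in> grid d eps. A x \<and> x i = 0}"
      using grid_upd[OF _ i _ eps, of _ 0] inv by auto
    show "(\<lambda>x. x(i := real w * eps)) ` {x \<in> grid d eps. A x \<and> x i = 0} \<subseteq> {x \<in> grid d eps. A x \<and> x i = real w * eps}"
      using grid_upd[OF _ i w eps] inv by auto
  qed
  thus ?thesis by (rule bij_betw_same_card)
qed

lemma slice_total:
  assumes eps: "eps > 0" and i: "i < d"
    and inv: "\<And>x z. A (x(i:=z)) = A x"
  shows "card {x\<in>grid d eps. A x} = (nat \<lfloor>1/eps\<rfloor> + 1) * card {x\<in>grid d eps. A x \<and> x i = 0}"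
proof -
  let ?N = "nat \<lfloor>1/eps\<rfloor>"
  have eq: "{x\<in>grid d eps. A x} = (\<Union>w\<in>{..?N}. {x\<in>grid d eps. A x \<and> x i = real w * eps})"
    using grid_coord[OF _ i eps] by auto
  have "card {x\<in>grid d eps. A x} = (\<Sum>w\<in>{..?N}. card {x\<in>grid d eps. A x \<and> x i = real w * eps})"
    unfolding eq
    by (rule card_UN_disjoint) (use eps finite_grid[OF eps] in auto)
  also have "\<dots> = (\<Sum>w\<in>{..?N}. card {x\<in>grid d eps. A x \<and> x i = 0})"
    using slice_card[OF eps i _ inv] by simp
  finally show ?thesis by simp
qed

definition phi :: "((nat \<Rightarrow> real) \<Rightarrow> bool) \<Rightarrow> nat \<Rightarrow> real \<Rightarrow> nat \<Rightarrow> real \<Rightarrow> (nat \<Rightarrow> real) \<Rightarrow> real" where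
  "phi A i v N eps x = (if A x \<and> x i = v * eps then 1/2 else 1) *
      (if A x then 1 / (1 - 1 / (2 * (real N + 1))) else 1)"

lemma phi_sum:
  assumes eps: "eps > 0" and i: "i < d" and v: "v \<le> nat \<lfloor>1/eps\<rfloor>"
    and inv: "\<And>x z. A (x(i:=z)) = A x"
  shows "(\<Sum>x\<in>grid d eps. phi A i (real v) (nat \<lfloor>1/eps\<rfloor>) eps x) = real (card (grid d eps))"
proof -
  let ?N = "nat \<lfloor>1/eps\<rfloor>"
  let ?G = "grid d eps"
  let ?C0 = "card {x\<in>?G. A x \<and> x i = 0}"
  let ?mu = "1 - 1 / (2 * (real ?N + 1))"
  have fin: "finite ?G" by (rule finite_grid[OF eps])
  have mu: "?mu = (2 * real ?N + 1) / (2 * (real ?N + 1))" by (simp add: field_simps)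
  have mupos: "?mu > 0" unfolding mu by simp
  have cA: "card {x\<in>?G. A x} = (?N+1) * ?C0" by (rule slice_total[OF eps i inv])
  have cv: "card {x\<in>?G. A x \<and> x i = real v * eps} = ?C0" by (rule slice_card[OF eps i v inv])
  have s1: "(\<Sum>x\<in>?G. phi A i (real v) ?N eps x) =
      (\<Sum>x\<in>?G \<inter> {x. A x}. (if x i = real v * eps then 1/2 else 1) / ?mu) + (\<Sum>x\<in>?G \<inter> - {x. A x}. 1)"
    unfolding phi_def using fin by (subst sum.If_cases[symmetric]) (auto intro!: sum.cong)
  have s2: "(\<Sum>x\<in>?G \<inter> {x. A x}. (if x i = real v * eps then 1/2 else 1::real)) =
      (\<Sum>x\<in>?G \<inter> {x. A x} \<inter> {x. x i = real v * eps}. 1/2) + (\<Sum>x\<in>?G \<inter> {x. A x} \<inter> - {x. x i = real v * eps}. 1)"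
    using fin by (subst sum.If_cases) auto
  have c1: "card (?G \<inter> {x. A x} \<inter> {x. x i = real v * eps}) = ?C0"
    using cv by (simp add: Int_def conj_assoc)
  have c2: "card (?G \<inter> {x. A x}) = (?N+1) * ?C0"
    using cA by (simp add: Int_def)
  have c3: "card (?G \<inter> {x. A x} \<inter> - {x. x i = real v * eps}) = ?N * ?C0"
  proof -
    have "?G \<inter> {x. A x} \<inter> - {x. x i = real v * eps} = (?G \<inter> {x. A x}) - (?G \<inter> {x. A x} \<inter> {x. x i = real v * eps})"
      by auto
    hence "card (?G \<inter> {x. A x} \<inter> - {x. x i = real v * eps}) = card (?G \<inter> {x. A x}) - card (?G \<inter> {x. A x} \<inter> {x. x i = real v * eps})"
      using fin by (metis (no_types, lifting) Int_lower1 card_Diff_subset finite_Int)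
    thus ?thesis using c1 c2 by simp
  qed
  have c4: "card (?G \<inter> - {x. A x}) = card ?G - (?N+1) * ?C0"
  proof -
    have "?G \<inter> - {x. A x} = ?G - (?G \<inter> {x. A x})" by auto
    thus ?thesis using fin c2 by (simp add: card_Diff_subset)
  qed
  have c5: "(?N+1) * ?C0 \<le> card ?G"
    using c2 fin by (metis Int_lower1 card_mono)
  have "(\<Sum>x\<in>?G \<inter> {x. A x}. (if x i = real v * eps then 1/2 else 1) / ?mu) =
        (\<Sum>x\<in>?G \<inter> {x. A x}. (if x i = real v * eps then 1/2 else 1::real)) / ?mu"
    by (simp add: sum_divide_distrib)
  also have "\<dots> = (real ?C0 / 2 + real ?N * real ?C0) / ?mu"
    unfolding s2 using c1 c3 by simp
  also have "\<dots> = (real ?N + 1) * real ?C0"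
    unfolding mu by (simp add: field_simps)
  finally have s3: "(\<Sum>x\<in>?G \<inter> {x. A x}. (if x i = real v * eps then 1/2 else 1) / ?mu) = (real ?N + 1) * real ?C0" .
  show ?thesis
    unfolding s1 s3 using c4 c5 by (simp add: of_nat_diff algebra_simps)
qed



lemma phi_nonneg: "phi A i v N eps x \<ge> 0"
proof -
  have "1 - 1 / (2 * (real N + 1)) > 0" by (simp add: field_simps)
  thus ?thesis unfolding phi_def by auto
qed

lemma core:
  fixes k :: nat
  assumes eps: "eps > 0" and i: "i < d" and v: "v \<le> nat \<lfloor>1/eps\<rfloor>"
    and inv: "\<And>x z. A (x(i:=z)) = A x" and s: "s \<ge> 0"
  shows "real (card {c \<in> PiE {..<k} (\<lambda>_. grid d eps).
             real (card {j. j<k \<and> A (c j)}) > s \<and>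
             real (card {j. j<k \<and> A (c j) \<and> c j i = real v * eps})
               < 11/20 * real (card {j. j<k \<and> A (c j)}) / (real (nat \<lfloor>1/eps\<rfloor>) + 1)})
         \<le> exp (- s / (10 * (real (nat \<lfloor>1/eps\<rfloor>) + 1))) * real (card (PiE {..<k} (\<lambda>_. grid d eps)))"
proof -
  define N where "N = nat \<lfloor>1/eps\<rfloor>"
  define G where "G = grid d eps"
  define S where "S = PiE {..<k} (\<lambda>_. G)"
  define q where "q = 1 / (real N + 1)"
  define mu where "mu = 1 - 1 / (2 * (real N + 1))"
  define Z where "Z c = (\<Prod>j<k. phi A i (real v) N eps (c j))" for c
  define bad where "bad = {c \<in> S. real (card {j. j<k \<and> A (c j)}) > s \<and>
             real (card {j. j<k \<and> A (c j) \<and> c j i = real v * eps})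
               < 11/20 * real (card {j. j<k \<and> A (c j)}) / (real N + 1)}"
  have finG: "finite G" unfolding G_def by (rule finite_grid[OF eps])
  have finS: "finite S" unfolding S_def using finG by (intro finite_PiE) auto
  have qpos: "q > 0" unfolding q_def by simp
  have mu_q: "mu = 1 - q/2" unfolding mu_def q_def by simp
  have mupos: "mu > 0" unfolding mu_q q_def by (simp add: field_simps)
  have cardS: "card S = card G ^ k" unfolding S_def by (simp add: card_PiE)
  have sumZ: "(\<Sum>c\<in>S. Z c) = real (card S)"
  proof -
    have "(\<Sum>c\<in>S. Z c) = (\<Prod>j<k. \<Sum>x\<in>G. phi A i (real v) N eps x)"
      unfolding Z_def S_def by (rule prod_sum_PiE[symmetric]) (use finG in auto)
    also have "\<dots> = real (card G) ^ k"
      using phi_sum[OF eps i v inv] unfolding G_def N_def by simp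
    finally show ?thesis using cardS by simp
  qed
  have Zform: "Z c = (1/2) ^ card {j. j<k \<and> A (c j) \<and> c j i = real v * eps} * (1/mu) ^ card {j. j<k \<and> A (c j)}" for c
  proof -
    have "Z c = (\<Prod>j<k. (if A (c j) \<and> c j i = real v * eps then 1/2 else 1)) * (\<Prod>j<k. (if A (c j) then 1/mu else 1))"
      unfolding Z_def phi_def mu_def by (simp add: prod.distrib)
    also have "(\<Prod>j<k. (if A (c j) \<and> c j i = real v * eps then 1/2 else 1)) = (\<Prod>j\<in>{j\<in>{..<k}. A (c j) \<and> c j i = real v * eps}. 1/2::real)"
      by (rule prod.inter_filter[symmetric]) simp
    also have "(\<Prod>j<k. (if A (c j) then 1/mu else 1)) = (\<Prod>j\<in>{j\<in>{..<k}. A (c j)}. 1/mu)"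
      by (rule prod.inter_filter[symmetric]) simp
    finally show ?thesis by simp
  qed
  have Zlow: "Z c \<ge> exp (s * q / 10)" if c: "c \<in> bad" for c
  proof -
    define n where "n = real (card {j. j<k \<and> A (c j)})"
    define X where "X = real (card {j. j<k \<and> A (c j) \<and> c j i = real v * eps})"
    have ns: "n > s" and Xn: "X < 11/20 * n * q" using c unfolding bad_def n_def X_def q_def by auto
    have e1: "(1/2::real) ^ card {j. j<k \<and> A (c j) \<and> c j i = real v * eps} = exp (- X * ln 2)"
      unfolding X_def by (simp add: exp_of_nat_mult exp_minus inverse_eq_divide power_one_over)
    have e2: "(1/mu) ^ card {j. j<k \<and> A (c j)} = exp (- n * ln mu)"
      unfolding n_def using mupos by (simp add: exp_of_nat_mult exp_minus inverse_eq_divide power_one_over)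
    have lnmu: "ln mu \<le> - q/2" using ln_le_minus_one[OF mupos] mu_q by simp
    have ln2: "ln (2::real) \<le> 25/36" by (rule ln2_le_25_over_36)
    have n0: "n \<ge> 0" unfolding n_def by simp
    define w where "w = n * q"
    have w0: "w \<ge> 0" unfolding w_def using n0 qpos by simp
    have "X * ln 2 \<le> (11/20 * w) * ln 2"
      using Xn unfolding w_def by (intro mult_right_mono) auto
    moreover have "(11/20 * w) * ln 2 \<le> (11/20 * w) * (25/36)"
      using ln2 w0 by (intro mult_left_mono) auto
    moreover have "w/2 \<le> - n * ln mu"
    proof -
      have "n * (q/2) \<le> n * (- ln mu)" using lnmu n0 by (intro mult_left_mono) auto
      thus ?thesis unfolding w_def by simp
    qed
    moreover have "w / 10 \<ge> s * q / 10" using ns qpos unfolding w_def by simp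
    ultimately have "- X * ln 2 + - n * ln mu \<ge> s * q / 10"
      using w0 by linarith
    hence "exp (s * q / 10) \<le> exp (- X * ln 2) * exp (- n * ln mu)"
      by (simp add: exp_add[symmetric])
    thus ?thesis unfolding Zform e1 e2 .
  qed
  have Zpos: "Z c \<ge> 0" for c unfolding Z_def by (intro prod_nonneg) (simp add: phi_nonneg)
  have "real (card bad) * exp (s * q / 10) = (\<Sum>c\<in>bad. exp (s * q / 10))" by simp
  also have "\<dots> \<le> (\<Sum>c\<in>bad. Z c)" using Zlow by (intro sum_mono) auto
  also have "\<dots> \<le> (\<Sum>c\<in>S. Z c)"
    by (rule sum_mono2[OF finS]) (use Zpos in \<open>auto simp: bad_def\<close>)
  finally have "real (card bad) * exp (s * q / 10) \<le> real (card S)" using sumZ by simp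
  hence "real (card bad) \<le> real (card S) / exp (s * q / 10)" by (simp add: field_simps)
  also have "\<dots> = exp (- s * q / 10) * real (card S)" by (simp add: exp_minus field_simps)
  finally show ?thesis unfolding bad_def S_def G_def N_def q_def by (simp add: field_simps)
qed



definition tok :: "(nat \<times> real \<times> int) \<Rightarrow> (nat \<Rightarrow> real) \<Rightarrow> bool" where
  "tok t y = (case t of (i, \<xi>, l) \<Rightarrow> (l = -1 \<longrightarrow> y i \<le> \<xi>) \<and> (l = 1 \<longrightarrow> y i > \<xi>))"

lemma cell_tok: "y \<in> cell \<pi> \<longleftrightarrow> (\<forall>t\<in>set \<pi>. tok t y)"
  unfolding cell_def tok_def by (auto split: prod.splits)

lemma tok_cong: "y (fst t) = y' (fst t) \<Longrightarrow> tok t y = tok t y'"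
  unfolding tok_def by (auto split: prod.splits)

definition Aok :: "nat \<Rightarrow> real \<Rightarrow> path \<Rightarrow> nat \<Rightarrow> (nat \<Rightarrow> real) \<Rightarrow> bool" where
  "Aok d eps \<pi> i x = (\<forall>t\<in>set \<pi>. fst t \<noteq> i \<longrightarrow>
      tok t x \<and> tok t (shift d eps 1 x) \<and> tok t (shift d eps (-1) x))"

lemma Aok_upd: "Aok d eps \<pi> i (x(i:=z)) = Aok d eps \<pi> i x"
proof -
  have "tok t (x(i:=z)) = tok t x \<and> tok t (shift d eps s (x(i:=z))) = tok t (shift d eps s x)"
    if "fst t \<noteq> i" for t s
    using that by (intro conjI tok_cong) (auto simp: shift_def)
  thus ?thesis unfolding Aok_def by auto
qed

definition cthr :: "real \<Rightarrow> nat \<Rightarrow> real \<Rightarrow> real" where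
  "cthr eps N \<xi> = real_of_int (max (-2) (min (int N + 1) \<lfloor>\<xi>/eps\<rfloor>)) * eps"

lemma cthr_le:
  assumes eps: "eps > 0" and m: "-1 \<le> m" "m \<le> int N + 1"
  shows "(real_of_int m * eps \<le> \<xi>) = (real_of_int m * eps \<le> cthr eps N \<xi>)"
proof -
  have "(real_of_int m * eps \<le> \<xi>) = (real_of_int m \<le> \<xi>/eps)" using eps by (simp add: field_simps)
  also have "\<dots> = (m \<le> \<lfloor>\<xi>/eps\<rfloor>)" by (simp add: le_floor_iff)
  also have "\<dots> = (m \<le> max (-2) (min (int N + 1) \<lfloor>\<xi>/eps\<rfloor>))" using m by linarith
  also have "\<dots> = (real_of_int m * eps \<le> cthr eps N \<xi>)"
    unfolding cthr_def using eps by (simp del: of_int_max of_int_min)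
  finally show ?thesis .
qed

definition canon :: "real \<Rightarrow> nat \<Rightarrow> path \<Rightarrow> path" where
  "canon eps N \<pi> = map (\<lambda>(i, \<xi>, l). (i, cthr eps N \<xi>, l)) \<pi>"

definition gp :: "nat \<Rightarrow> real \<Rightarrow> nat \<Rightarrow> (nat \<Rightarrow> real) \<Rightarrow> bool" where
  "gp d eps N y = (\<forall>i<d. \<exists>m::int. -1 \<le> m \<and> m \<le> int N + 1 \<and> y i = real_of_int m * eps)"

lemma tok_canon:
  assumes eps: "eps > 0" and "i < d" "gp d eps N y"
  shows "tok (i, cthr eps N \<xi>, l) y = tok (i, \<xi>, l) y"
proof -
  obtain m where m: "-1 \<le> m" "m \<le> int N + 1" "y i = real_of_int m * eps"
    using assms unfolding gp_def by blast
  have "(y i \<le> \<xi>) = (y i \<le> cthr eps N \<xi>)" using cthr_le[OF eps m(1,2)] m(3) by simp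
  thus ?thesis unfolding tok_def by auto
qed

lemma gp_grid:
  assumes eps: "eps > 0" and x: "x \<in> grid d eps" and s: "s \<in> {-1, 0, 1}"
  shows "gp d eps (nat \<lfloor>1/eps\<rfloor>) (shift d eps s x)"
  unfolding gp_def
proof (intro allI impI)
  fix i assume i: "i < d"
  obtain j where j: "j \<le> nat \<lfloor>1/eps\<rfloor>" "x i = real j * eps" using grid_coord[OF x i eps] by blast
  have fl: "0 \<le> \<lfloor>1/eps\<rfloor>" using eps by simp
  have jj: "int j \<le> \<lfloor>1/eps\<rfloor>" using j(1) fl by linarith
  have "shift d eps s x i = real_of_int (int j + (if s = -1 then -1 else if s = 0 then 0 else 1)) * eps"
    using s j(2) i by (auto simp: shift_def algebra_simps)
  moreover have "-1 \<le> int j + (if s = -1 then -1 else if s = 0 then 0 else 1)"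
    "int j + (if s = -1 then -1 else if s = 0 then 0 else 1) \<le> int (nat \<lfloor>1/eps\<rfloor>) + 1"
    using jj fl by auto
  ultimately show "\<exists>m. -1 \<le> m \<and> m \<le> int (nat \<lfloor>1 / eps\<rfloor>) + 1 \<and> shift d eps s x i = real_of_int m * eps"
    by blast
qed

lemma shift0: "shift d eps 0 x = x" unfolding shift_def by auto

lemma Aok_canon:
  assumes eps: "eps > 0" and vp: "valid_path d \<pi>" and x: "x \<in> grid d eps"
  shows "Aok d eps (canon eps (nat \<lfloor>1/eps\<rfloor>) \<pi>) i x = Aok d eps \<pi> i x"
proof -
  let ?N = "nat \<lfloor>1/eps\<rfloor>"
  have g: "gp d eps ?N x" "gp d eps ?N (shift d eps 1 x)" "gp d eps ?N (shift d eps (-1) x)"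
    using gp_grid[OF eps x, of 0] gp_grid[OF eps x, of 1] gp_grid[OF eps x, of "-1"] by (auto simp: shift0)
  have "tok (i', cthr eps ?N \<xi>, l) y = tok (i', \<xi>, l) y"
    if "(i', \<xi>, l) \<in> set \<pi>" "y \<in> {x, shift d eps 1 x, shift d eps (-1) x}" for i' \<xi> l y
  proof -
    have "i' < d" using vp that(1) unfolding valid_path_def by auto
    thus ?thesis using tok_canon[OF eps, of i' d ?N y] g that(2) by auto
  qed
  thus ?thesis unfolding Aok_def canon_def by fastforce
qed

lemma canon_in:
  assumes vp: "valid_path d \<pi>"
  shows "set (canon eps N \<pi>) \<subseteq> {..<d} \<times> ((\<lambda>m. real_of_int m * eps) ` {-2..int N + 1}) \<times> {-1, 1}"
    "length (canon eps N \<pi>) = length \<pi>"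
  using vp unfolding canon_def valid_path_def cthr_def by (auto)



lemma data_mem:
  assumes "x \<in># dataset d eps k c"
  shows "\<exists>j<k. x = c j \<or> x = shift d eps 1 (c j) \<or> x = shift d eps (-1) (c j)"
proof -
  have "x \<in> set_mset (dataset d eps k c)" using assms by simp
  hence "\<exists>j\<in>{..<k}. x \<in># replicate_mset (k^2 * nat \<lceil>(ln (real k))^3\<rceil>) (c j)
                             + {# shift d eps 1 (c j), shift d eps (-1) (c j) #}"
    unfolding dataset_def by (subst (asm) set_mset_sum) auto
  thus ?thesis by (auto split: if_splits)
qed

lemma data_coord:
  assumes eps: "eps > 0" and c: "c \<in> PiE {..<k} (\<lambda>_. grid d eps)"
    and x: "x \<in># dataset d eps k c" and i: "i < d"
  shows "\<exists>a::int. -1 \<le> a \<and> a \<le> int (nat \<lfloor>1/eps\<rfloor>) + 1 \<and> x i = real_of_int a * eps"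
proof -
  obtain j where j: "j < k" "x = c j \<or> x = shift d eps 1 (c j) \<or> x = shift d eps (-1) (c j)"
    using data_mem[OF x] by blast
  have cj: "c j \<in> grid d eps" using c j(1) by auto
  obtain s :: real where s: "s \<in> {-1,0,1}" "x = shift d eps s (c j)" using j(2) shift0 by (metis insertCI)
  show ?thesis using gp_grid[OF eps cj s(1)] s(2) i unfolding gp_def by blast
qed

lemma det_ord:
  fixes k :: nat
  assumes eps: "eps > 0" and epsN: "eps * (real N + 1) \<le> 11/10" and N_def: "N = nat \<lfloor>1/eps\<rfloor>"
    and c: "c \<in> PiE {..<k} (\<lambda>_. grid d eps)"
    and vp: "valid_path d \<pi>" and i: "i < d"
    and xd: "x \<in># dataset d eps k c" and yd: "y \<in># dataset d eps k c"
    and xc: "x \<in> cell \<pi>" and yc: "y \<in> cell \<pi>"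
    and xle: "x i \<le> \<xi>" and ygt: "\<not> y i \<le> \<xi>"
    and Fbig: "real (card (F_idx d eps k c (cell \<pi>))) > sqrt (real k)"
    and H: "\<forall>v\<le>N. \<not> (real (card {j. j<k \<and> Aok d eps \<pi> i (c j)}) > sqrt (real k) \<and>
               real (card {j. j<k \<and> Aok d eps \<pi> i (c j) \<and> c j i = real v * eps})
                 < 11/20 * real (card {j. j<k \<and> Aok d eps \<pi> i (c j)}) / (real N + 1))"
  shows "eps * real (card (F_idx d eps k c (cell \<pi>))) / 2
           \<le> real (card {j \<in> F_idx d eps k c (cell \<pi>). damages d eps i \<xi> (c j)})"
proof -
  define F where "F = F_idx d eps k c (cell \<pi>)"
  obtain a where a: "-1 \<le> a" "a \<le> int N + 1" "x i = real_of_int a * eps"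
    using data_coord[OF eps c xd i] N_def by blast
  obtain b where b: "-1 \<le> b" "b \<le> int N + 1" "y i = real_of_int b * eps"
    using data_coord[OF eps c yd i] N_def by blast
  have finF: "finite F" unfolding F_def F_idx_def by simp
  have "card F > 0" using Fbig unfolding F_def by (smt (verit) of_nat_0 real_sqrt_ge_zero gr0I of_nat_0_le_iff)
  hence "F \<noteq> {}" by auto
  then obtain f where f: "f \<in> F" by blast
  have fk: "f < k" and fc: "c f \<in> cell \<pi>" and fs1: "shift d eps 1 (c f) \<in> cell \<pi>"
    and fs2: "shift d eps (-1) (c f) \<in> cell \<pi>"
    using f unfolding F_def F_idx_def damaged_in_def by auto
  have cfg: "c f \<in> grid d eps" using c fk by auto
  obtain p where p: "p \<le> N" "c f i = real p * eps" using grid_coord[OF cfg i eps] N_def by blast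
  define m where "m = \<lfloor>\<xi>/eps\<rfloor>"
  have am: "a \<le> m"
  proof -
    have "real_of_int a \<le> \<xi>/eps" using xle a(3) eps by (simp add: field_simps)
    thus ?thesis unfolding m_def by (simp add: le_floor_iff)
  qed
  have m_le: "real_of_int m * eps \<le> \<xi>"
  proof -
    have "real_of_int m \<le> \<xi>/eps" unfolding m_def by simp
    thus ?thesis using eps by (simp add: field_simps)
  qed
  have xi_lt: "\<xi> < real_of_int (m+1) * eps"
  proof -
    have "\<xi>/eps < real_of_int m + 1" unfolding m_def by linarith
    thus ?thesis using eps by (simp add: field_simps)
  qed
  have mb: "m < b"
  proof -
    have "real_of_int m * eps < real_of_int b * eps" using m_le ygt b(3) by simp
    thus ?thesis using eps by simp
  qed
  define w where "w = (if m + 1 \<le> int p then m + 1 else m)"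
  have w0: "0 \<le> w" and wN: "w \<le> int N" using am a(1) mb b(2) p(1) unfolding w_def by auto
  define vn where "vn = nat w"
  have vnN: "vn \<le> N" using wN w0 unfolding vn_def by simp
  have vnw: "real vn = real_of_int w" unfolding vn_def using w0 by simp
  have R1: "(real_of_int w + 1) * eps \<le> \<zeta>" if "real_of_int b * eps \<le> \<zeta>" "(real p + 1) * eps \<le> \<zeta>" for \<zeta>
  proof (cases "m + 1 \<le> int p")
    case True
    hence "real_of_int w + 1 \<le> real p + 1" unfolding w_def by simp
    hence "(real_of_int w + 1) * eps \<le> (real p + 1) * eps" using eps by (intro mult_right_mono) auto
    thus ?thesis using that by simp
  next
    case False
    hence "real_of_int w + 1 \<le> real_of_int b" unfolding w_def using mb by simp
    hence "(real_of_int w + 1) * eps \<le> real_of_int b * eps" using eps by (intro mult_right_mono) auto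
    thus ?thesis using that by simp
  qed
  have R2: "(real_of_int w - 1) * eps > \<zeta>" if "real_of_int a * eps > \<zeta>" "(real p - 1) * eps > \<zeta>" for \<zeta>
  proof (cases "m + 1 \<le> int p")
    case True
    hence "real_of_int a \<le> real_of_int w - 1" unfolding w_def using am by simp
    hence "real_of_int a * eps \<le> (real_of_int w - 1) * eps" using eps by (intro mult_right_mono) auto
    thus ?thesis using that by simp
  next
    case False
    hence "real p - 1 \<le> real_of_int w - 1" unfolding w_def by simp
    hence "(real p - 1) * eps \<le> (real_of_int w - 1) * eps" using eps by (intro mult_right_mono) auto
    thus ?thesis using that by simp
  qed
  have key: "j \<in> F \<and> damages d eps i \<xi> (c j)"
    if j: "j < k" "Aok d eps \<pi> i (c j)" "c j i = real vn * eps" for j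
  proof -
    define z where "z = c j"
    have zi: "z i = real_of_int w * eps" using j(3) vnw unfolding z_def by simp
    have z1: "shift d eps 1 z i = (real_of_int w + 1) * eps" using zi i by (simp add: shift_def algebra_simps)
    have z2: "shift d eps (-1) z i = (real_of_int w - 1) * eps" using zi i by (simp add: shift_def algebra_simps)
    have toks: "tok t z \<and> tok t (shift d eps 1 z) \<and> tok t (shift d eps (-1) z)" if t: "t \<in> set \<pi>" for t
    proof (cases "fst t = i")
      case False
      thus ?thesis using j(2) t unfolding Aok_def z_def by auto
    next
      case True
      obtain \<zeta> l where tt: "t = (i, \<zeta>, l)" using True by (cases t) auto
      have tx: "tok t x" and ty: "tok t y" and tf1: "tok t (shift d eps 1 (c f))"
        and tf2: "tok t (shift d eps (-1) (c f))"
        using xc yc fs1 fs2 t by (auto simp: cell_tok)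
      have cf1: "shift d eps 1 (c f) i = (real p + 1) * eps" using p(2) i by (simp add: shift_def algebra_simps)
      have cf2: "shift d eps (-1) (c f) i = (real p - 1) * eps" using p(2) i by (simp add: shift_def algebra_simps)
      have lm: "l = -1 \<Longrightarrow> (real_of_int w + 1) * eps \<le> \<zeta>"
        using R1 tx ty tf1 b(3) cf1 unfolding tt tok_def by auto
      have lp: "l = 1 \<Longrightarrow> (real_of_int w - 1) * eps > \<zeta>"
        using R2 tx ty tf2 a(3) cf2 unfolding tt tok_def by auto
      have o1: "real_of_int w * eps \<le> (real_of_int w + 1) * eps" using eps by (simp add: algebra_simps)
      have o2: "(real_of_int w - 1) * eps \<le> real_of_int w * eps" using eps by (simp add: algebra_simps)
      have o3: "(real_of_int w - 1) * eps \<le> (real_of_int w + 1) * eps" using eps by (simp add: algebra_simps)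
      show ?thesis unfolding tt tok_def using lm lp zi z1 z2 o1 o2 o3 by auto
    qed
    have "z \<in> cell \<pi>" "shift d eps 1 z \<in> cell \<pi>" "shift d eps (-1) z \<in> cell \<pi>"
      using toks by (auto simp: cell_tok)
    hence jF: "j \<in> F" using j(1) unfolding F_def F_idx_def damaged_in_def z_def by auto
    have "damages d eps i \<xi> z"
    proof (cases "m + 1 \<le> int p")
      case True
      hence "z i = real_of_int (m+1) * eps" "shift d eps (-1) z i = real_of_int m * eps"
        using zi z2 unfolding w_def by auto
      thus ?thesis unfolding damages_def separates_def using m_le xi_lt by auto
    next
      case False
      hence "z i = real_of_int m * eps" "shift d eps 1 z i = real_of_int (m+1) * eps"
        using zi z1 unfolding w_def by auto
      thus ?thesis unfolding damages_def separates_def using m_le xi_lt by auto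
    qed
    thus ?thesis using jF unfolding z_def by simp
  qed
  define T where "T = {j. j<k \<and> Aok d eps \<pi> i (c j)}"
  define X where "X = {j. j<k \<and> Aok d eps \<pi> i (c j) \<and> c j i = real vn * eps}"
  have FT: "F \<subseteq> T"
  proof
    fix j assume "j \<in> F"
    hence "j < k" "c j \<in> cell \<pi>" "shift d eps 1 (c j) \<in> cell \<pi>" "shift d eps (-1) (c j) \<in> cell \<pi>"
      unfolding F_def F_idx_def damaged_in_def by auto
    thus "j \<in> T" unfolding T_def Aok_def by (auto simp: cell_tok)
  qed
  have finT: "finite T" unfolding T_def by simp
  have cFT: "card F \<le> card T" by (rule card_mono[OF finT FT])
  have Tbig: "real (card T) > sqrt (real k)" using Fbig cFT unfolding F_def by linarith
  have "\<not> real (card X) < 11/20 * real (card T) / (real N + 1)"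
    using H vnN Tbig unfolding T_def X_def by blast
  hence Xge: "real (card X) \<ge> 11/20 * real (card T) / (real N + 1)" by simp
  have XD: "X \<subseteq> {j \<in> F. damages d eps i \<xi> (c j)}" using key unfolding X_def by auto
  have "card X \<le> card {j \<in> F. damages d eps i \<xi> (c j)}" by (rule card_mono) (use finF XD in auto)
  moreover have "eps * real (card F) / 2 \<le> 11/20 * real (card T) / (real N + 1)"
  proof -
    have "eps * real (card F) / 2 * (real N + 1) = (eps * (real N + 1)) * real (card F) / 2" by simp
    also have "\<dots> \<le> 11/10 * real (card F) / 2" using epsN by (intro divide_right_mono mult_right_mono) auto
    also have "\<dots> \<le> 11/10 * real (card T) / 2" using cFT by simp
    finally show ?thesis by (simp add: field_simps)
  qed
  ultimately show ?thesis using Xge unfolding F_def by linarith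
qed



lemma numeric:
  fixes k :: nat and \<delta> :: real
  assumes k: "k > 500" and h1: "(ln (real k))^3 / sqrt (real k) < \<delta>" and h2: "\<delta> < 1/100"
  defines "t \<equiv> ln (real k)"
  defines "K \<equiv> real_of_int \<lceil>ln (real k)\<rceil>"
  defines "eps \<equiv> 50 * \<delta> / real_of_int \<lceil>ln (real k)\<rceil>"
  defines "N \<equiv> nat \<lfloor>1/eps\<rfloor>"
  defines "d \<equiv> 300 * nat \<lceil>ln (real k)\<rceil>"
  defines "l \<equiv> nat \<lfloor>log 2 (real k) / 4\<rfloor>"
  shows "eps > 0" "eps * (real N + 1) \<le> 11/10" "2 * d * (N + 4) \<le> k" "l + 1 \<le> k" "d \<le> k" "N + 1 \<le> k"
    "real k ^ (l + 3) * exp (- sqrt (real k) / (10 * (real N + 1))) \<le> 1 / real k"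
proof -
  have kpos: "real k > 0" using k by simp
  have "exp (5::real) = exp 1 ^ 5" using exp_of_nat_mult[of 5 "1::real"] by simp
  also have "\<dots> \<le> 3 ^ 5" using exp_le by (intro power_mono) auto
  finally have "exp (5::real) < real k" using k by simp
  hence t5: "t > 5" unfolding t_def using kpos by (metis exp_le_cancel_iff exp_ln not_le)
  have sk: "sqrt (real k) > 0" using kpos by simp
  have t3: "t^3 < \<delta> * sqrt (real k)" using h1 sk unfolding t_def by (simp add: field_simps)
  have sk100: "sqrt (real k) > 100 * t^3"
  proof -
    have "\<delta> * sqrt (real k) \<le> 1/100 * sqrt (real k)" using h2 sk by (intro mult_right_mono) auto
    thus ?thesis using t3 by simp
  qed
  have tpos: "t > 0" using t5 by simp
  have dpos: "\<delta> > 0"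
  proof -
    have "t^3 > 0" using tpos by simp
    hence "t^3 / sqrt (real k) > 0" using sk by simp
    thus ?thesis using h1 unfolding t_def by simp
  qed
  have Kt: "t \<le> K" "K < t + 1" unfolding K_def t_def using ceiling_correct[of "ln (real k)"] by auto
  have K12: "K \<le> 6/5 * t" using Kt t5 by simp
  have Kpos: "K > 0" using Kt tpos by simp
  have eps_def': "eps = 50 * \<delta> / K" unfolding eps_def K_def by simp
  show epos: "eps > 0" unfolding eps_def' using dpos Kpos by simp
  have eps_small: "eps \<le> 1/10"
  proof -
    have "50 * \<delta> \<le> 1/2" using h2 by simp
    hence "eps \<le> (1/2) / K" unfolding eps_def' using Kpos by (intro divide_right_mono) auto
    also have "\<dots> \<le> (1/2) / 5" using Kt t5 by (intro divide_left_mono) auto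
    finally show ?thesis by simp
  qed
  have Nle: "real N \<le> 1/eps" unfolding N_def using epos by (intro of_nat_floor) simp
  show "eps * (real N + 1) \<le> 11/10"
  proof -
    have "eps * (real N + 1) \<le> eps * (1/eps + 1)" using Nle epos by (intro mult_left_mono) auto
    also have "\<dots> = 1 + eps" using epos by (simp add: field_simps)
    finally show ?thesis using eps_small by simp
  qed
  have inv_eps: "1/eps \<le> K * sqrt (real k) / (50 * t^3)"
  proof -
    have "1/eps = K / (50 * \<delta>)" unfolding eps_def' by simp
    also have "\<dots> \<le> K / (50 * (t^3 / sqrt (real k)))"
      using h1 Kpos tpos sk dpos unfolding t_def by (intro divide_left_mono mult_pos_pos) auto
    also have "\<dots> = K * sqrt (real k) / (50 * t^3)" by simp
    finally show ?thesis .
  qed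
  have tt25: "t * t \<ge> 5 * 5" using t5 by (intro mult_mono) auto
  have t3t: "t^3 \<ge> 25 * t"
  proof -
    have "(5 * 5) * t \<le> (t * t) * t" using tt25 tpos by (intro mult_right_mono) auto
    thus ?thesis by (simp add: power3_eq_cube)
  qed
  have Kt3: "K / (50 * t^3) \<le> 1/1000"
  proof -
    have "t^3 \<ge> 25 * t" by (rule t3t)
    hence "50 * t^3 \<ge> 1000 * (6/5 * t)" using tpos by linarith
    hence "50 * t^3 \<ge> 1000 * K" using K12 by linarith
    thus ?thesis using tpos by (simp add: field_simps)
  qed
  have N1: "real N + 1 \<le> sqrt (real k) / 1000 + 1"
  proof -
    have "K * sqrt (real k) / (50 * t^3) = K / (50 * t^3) * sqrt (real k)" by simp
    also have "\<dots> \<le> 1/1000 * sqrt (real k)" using Kt3 sk by (intro mult_right_mono) auto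
    finally show ?thesis using Nle inv_eps by simp
  qed
  have t3ge: "t^3 \<ge> 125" using t3t t5 by simp
  have skbig: "sqrt (real k) \<ge> 12500" using sk100 t3ge by simp
  have sqk: "sqrt (real k) \<le> real k"
  proof -
    have "sqrt (real k) * sqrt (real k) = real k" using kpos by simp
    moreover have "sqrt (real k) * 1 \<le> sqrt (real k) * sqrt (real k)" using skbig sk k by (intro mult_left_mono) auto
    ultimately show ?thesis by simp
  qed
  have dK: "real d = 300 * K" unfolding d_def K_def using Kpos K_def by simp
  have d360: "real d \<le> 360 * t" using dK K12 by simp
  have d_sk: "real d \<le> sqrt (real k)" using d360 sk100 t3t by simp
  show "d \<le> k" using d_sk sqk by simp
  show "N + 1 \<le> k"
  proof -
    have "real N + 1 \<le> sqrt (real k)" using N1 skbig by simp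
    thus ?thesis using sqk by simp
  qed
  show "2 * d * (N + 4) \<le> k"
  proof -
    have n4: "real N + 4 \<le> sqrt (real k) / 2" using N1 skbig by simp
    have "real (2 * d * (N + 4)) = 2 * real d * (real N + 4)" by simp
    also have "\<dots> \<le> 2 * real d * (sqrt (real k) / 2)" using n4 by (intro mult_left_mono) auto
    also have "\<dots> = real d * sqrt (real k)" by simp
    also have "\<dots> \<le> sqrt (real k) * sqrt (real k)" using d_sk sk by (intro mult_right_mono) auto
    also have "\<dots> = real k" using kpos by simp
    finally show ?thesis by linarith
  qed
  have ln2: "ln (2::real) \<ge> 2/3" by (rule ln2_ge_two_thirds)
  have lt: "real l \<le> 3/8 * t"
  proof -
    have "log 2 (real k) / 4 = t / (4 * ln 2)" unfolding t_def log_def by simp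
    also have "\<dots> \<le> t / (4 * (2/3))" using tpos ln2 by (intro divide_left_mono) auto
    finally have "log 2 (real k) / 4 \<le> 3/8 * t" by simp
    moreover have "log 2 (real k) / 4 \<ge> 0" using k by simp
    moreover have "real l \<le> log 2 (real k) / 4" unfolding l_def using calculation(2) by (rule of_nat_floor)
    ultimately show ?thesis by linarith
  qed
  show "l + 1 \<le> k"
  proof -
    have "t < real k" unfolding t_def using kpos by simp
    hence "real l + 1 \<le> real k" using lt tpos k by simp
    thus ?thesis by linarith
  qed
  have E: "sqrt (real k) / (10 * (real N + 1)) \<ge> 3 * t^2"
  proof -
    define Q where "Q = K * sqrt (real k) / (50 * t^3)"
    have a0: "30 * t^2 * (real N + 1) \<le> 30 * t^2 * (Q + 1)"
      using Nle inv_eps unfolding Q_def by (intro mult_left_mono) auto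
    have a: "30 * t^2 * (real N + 1) \<le> 30 * t^2 * Q + 30 * t^2"
      using a0 by (simp add: algebra_simps)
    have b: "30 * t^2 * Q = 3/5 * (K / t) * sqrt (real k)"
      using tpos unfolding Q_def by (simp add: field_simps power2_eq_square power3_eq_cube)
    have c: "K / t \<le> 6/5" using K12 tpos by (simp add: field_simps)
    have c2: "3/5 * (K / t) * sqrt (real k) \<le> 3/5 * (6/5) * sqrt (real k)"
      using c sk by (intro mult_right_mono) auto
    have e: "30 * t^2 \<le> 3/50 * sqrt (real k)"
    proof -
      have "t^3 \<ge> 5 * t^2" using t5 by (simp add: power2_eq_square power3_eq_cube)
      thus ?thesis using sk100 by simp
    qed
    have "30 * t^2 * (real N + 1) \<le> sqrt (real k)"
      using a b c2 e sk by linarith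
    thus ?thesis by (simp add: field_simps)
  qed
  have "real k ^ (l + 3) = exp (real (l + 3) * t)"
    unfolding t_def using kpos exp_of_nat_mult[of "l+3" "ln (real k)"] by (simp del: of_nat_add)
  hence "real k ^ (l + 3) * exp (- sqrt (real k) / (10 * (real N + 1))) \<le> exp (real (l + 3) * t) * exp (- (3 * t^2))"
    using E by simp
  also have "\<dots> = exp (real (l + 3) * t - 3 * t^2)" by (simp add: exp_add[symmetric])
  also have "\<dots> \<le> exp (- t)"
  proof -
    have "real (l + 4) \<le> 3 * t" using lt t5 by simp
    hence "real (l + 4) * t \<le> 3 * t * t" using tpos by (intro mult_right_mono) auto
    hence "real (l + 3) * t - 3 * t^2 \<le> - t" by (simp add: power2_eq_square algebra_simps)
    thus ?thesis by simp
  qed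
  also have "\<dots> = 1 / real k" unfolding t_def using kpos by (simp add: exp_minus inverse_eq_divide)
  finally show "real k ^ (l + 3) * exp (- sqrt (real k) / (10 * (real N + 1))) \<le> 1 / real k" .
qed



theorem lemma9:
  fixes k :: nat and \<delta> :: real and d :: nat and eps :: real
  assumes "k > 500"
    and "(ln (real k))^3 / sqrt (real k) < \<delta>" and "\<delta> < 1/100"
  defines "d \<equiv> 300 * nat \<lceil>ln (real k)\<rceil>"
    and "eps \<equiv> 50 * \<delta> / real_of_int \<lceil>ln (real k)\<rceil>"
  shows "measure_pmf.prob (pmf_of_set (PiE {..<k} (\<lambda>_. grid d eps)))
      {c. \<forall>\<pi>. valid_path d \<pi> \<and> real (length \<pi>) \<le> log 2 (real k) / 4 \<longrightarrow>
            real (card (F_idx d eps k c (cell \<pi>))) \<le> sqrt (real k)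
          \<or> (\<forall>i < d. \<forall>\<xi>::real.
               (\<exists>x y. x \<in># dataset d eps k c \<and> y \<in># dataset d eps k c \<and>
                      x \<in> cell \<pi> \<and> y \<in> cell \<pi> \<and> separates i \<xi> x y)
               \<longrightarrow> real (card {j \<in> F_idx d eps k c (cell \<pi>). damages d eps i \<xi> (c j)})
                     \<ge> eps * real (card (F_idx d eps k c (cell \<pi>))) / 2)}
    \<ge> 1 - 1 / real k"
proof -
  define N where "N = nat \<lfloor>1/eps\<rfloor>"
  define l where "l = nat \<lfloor>log 2 (real k) / 4\<rfloor>"
  define S where "S = PiE {..<k} (\<lambda>_. grid d eps)"
  define Alph where "Alph = {..<d} \<times> ((\<lambda>m. real_of_int m * eps) ` {-2..int N + 1}) \<times> {-1, 1::int}"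
  define CL where "CL = {xs. set xs \<subseteq> Alph \<and> length xs \<le> l}"
  define Idx where "Idx = CL \<times> {..<d} \<times> {..N}"
  define bad where "bad = (\<lambda>(Q, i, v). {c \<in> S.
             real (card {j. j<k \<and> Aok d eps Q i (c j)}) > sqrt (real k) \<and>
             real (card {j. j<k \<and> Aok d eps Q i (c j) \<and> c j i = real v * eps})
               < 11/20 * real (card {j. j<k \<and> Aok d eps Q i (c j)}) / (real N + 1)})"
  define U where "U = (\<Union>e\<in>Idx. bad e)"
  define target where "target = {c. \<forall>\<pi>. valid_path d \<pi> \<and> real (length \<pi>) \<le> log 2 (real k) / 4 \<longrightarrow>
            real (card (F_idx d eps k c (cell \<pi>))) \<le> sqrt (real k)
          \<or> (\<forall>i < d. \<forall>\<xi>::real.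
               (\<exists>x y. x \<in># dataset d eps k c \<and> y \<in># dataset d eps k c \<and>
                      x \<in> cell \<pi> \<and> y \<in> cell \<pi> \<and> separates i \<xi> x y)
               \<longrightarrow> real (card {j \<in> F_idx d eps k c (cell \<pi>). damages d eps i \<xi> (c j)})
                     \<ge> eps * real (card (F_idx d eps k c (cell \<pi>))) / 2)}"
  note num = numeric[OF assms(1) assms(2) assms(3), folded eps_def d_def, folded N_def l_def]
  have epos: "eps > 0" and epsN: "eps * (real N + 1) \<le> 11/10" and dN: "2 * d * (N + 4) \<le> k"
    and lk: "l + 1 \<le> k" and dk: "d \<le> k" and Nk: "N + 1 \<le> k"
    and fin_num: "real k ^ (l + 3) * exp (- sqrt (real k) / (10 * (real N + 1))) \<le> 1 / real k"
    using num by auto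
  have kpos: "k > 0" using assms(1) by simp
  have finG: "finite (grid d eps)" by (rule finite_grid[OF epos])
  have finS: "finite S" unfolding S_def using finG by (intro finite_PiE) auto
  have neS: "S \<noteq> {}" unfolding S_def using zero_grid by (auto simp: PiE_eq_empty_iff)
  have cSpos: "card S > 0" using finS neS by (simp add: card_gt_0_iff)
  have finAlph: "finite Alph" unfolding Alph_def by simp
  have finCL: "finite CL" unfolding CL_def by (rule finite_lists_length_le[OF finAlph])
  have finIdx: "finite Idx" unfolding Idx_def using finCL by simp
  have SU: "S - U \<subseteq> target"
  proof
    fix c assume c: "c \<in> S - U"
    have cS: "c \<in> PiE {..<k} (\<lambda>_. grid d eps)" using c unfolding S_def by simp
    have cg: "c j \<in> grid d eps" if "j < k" for j using cS that by auto
    show "c \<in> target" unfolding target_def mem_Collect_eq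
    proof (intro allI impI)
      fix \<pi> assume \<pi>: "valid_path d \<pi> \<and> real (length \<pi>) \<le> log 2 (real k) / 4"
      hence vp: "valid_path d \<pi>" by simp
      have lenl: "length \<pi> \<le> l"
      proof -
        have "int (length \<pi>) \<le> \<lfloor>log 2 (real k) / 4\<rfloor>" using \<pi> by (simp add: le_floor_iff)
        thus ?thesis unfolding l_def by linarith
      qed
      have canonCL: "canon eps N \<pi> \<in> CL"
        using canon_in[OF vp, of eps N] lenl unfolding CL_def Alph_def by auto
      have Aeq: "{j. j<k \<and> Aok d eps (canon eps N \<pi>) i (c j)} = {j. j<k \<and> Aok d eps \<pi> i (c j)}" for i
        using Aok_canon[OF epos vp cg] unfolding N_def by auto
      have Aeq2: "{j. j<k \<and> Aok d eps (canon eps N \<pi>) i (c j) \<and> c j i = real v * eps}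
           = {j. j<k \<and> Aok d eps \<pi> i (c j) \<and> c j i = real v * eps}" for i v
        using Aok_canon[OF epos vp cg] unfolding N_def by auto
      show "real (card (F_idx d eps k c (cell \<pi>))) \<le> sqrt (real k)
          \<or> (\<forall>i < d. \<forall>\<xi>::real.
               (\<exists>x y. x \<in># dataset d eps k c \<and> y \<in># dataset d eps k c \<and>
                      x \<in> cell \<pi> \<and> y \<in> cell \<pi> \<and> separates i \<xi> x y)
               \<longrightarrow> real (card {j \<in> F_idx d eps k c (cell \<pi>). damages d eps i \<xi> (c j)})
                     \<ge> eps * real (card (F_idx d eps k c (cell \<pi>))) / 2)"
      proof (cases "real (card (F_idx d eps k c (cell \<pi>))) \<le> sqrt (real k)")
        case True thus ?thesis by simp
      next
        case False
        hence Fbig: "real (card (F_idx d eps k c (cell \<pi>))) > sqrt (real k)" by simp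
        show ?thesis
        proof (intro disjI2 allI impI)
          fix i \<xi> assume i: "i < d"
          assume "\<exists>x y. x \<in># dataset d eps k c \<and> y \<in># dataset d eps k c \<and>
                      x \<in> cell \<pi> \<and> y \<in> cell \<pi> \<and> separates i \<xi> x y"
          then obtain x y where xy: "x \<in># dataset d eps k c" "y \<in># dataset d eps k c"
            "x \<in> cell \<pi>" "y \<in> cell \<pi>" "separates i \<xi> x y" by blast
          have H: "\<forall>v\<le>N. \<not> (real (card {j. j<k \<and> Aok d eps \<pi> i (c j)}) > sqrt (real k) \<and>
               real (card {j. j<k \<and> Aok d eps \<pi> i (c j) \<and> c j i = real v * eps})
                 < 11/20 * real (card {j. j<k \<and> Aok d eps \<pi> i (c j)}) / (real N + 1))"
          proof (intro allI impI)
            fix v assume v: "v \<le> N"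
            have "(canon eps N \<pi>, i, v) \<in> Idx" unfolding Idx_def using canonCL i v by auto
            hence "c \<notin> bad (canon eps N \<pi>, i, v)" using c unfolding U_def by blast
            hence nb: "\<not> (real (card {j. j<k \<and> Aok d eps (canon eps N \<pi>) i (c j)}) > sqrt (real k) \<and>
               real (card {j. j<k \<and> Aok d eps (canon eps N \<pi>) i (c j) \<and> c j i = real v * eps})
                 < 11/20 * real (card {j. j<k \<and> Aok d eps (canon eps N \<pi>) i (c j)}) / (real N + 1))"
              using c unfolding bad_def by auto
            thus "\<not> (real (card {j. j<k \<and> Aok d eps \<pi> i (c j)}) > sqrt (real k) \<and>
               real (card {j. j<k \<and> Aok d eps \<pi> i (c j) \<and> c j i = real v * eps})
                 < 11/20 * real (card {j. j<k \<and> Aok d eps \<pi> i (c j)}) / (real N + 1))"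
              using nb unfolding Aeq Aeq2 by simp
          qed
          show "real (card {j \<in> F_idx d eps k c (cell \<pi>). damages d eps i \<xi> (c j)})
                     \<ge> eps * real (card (F_idx d eps k c (cell \<pi>))) / 2"
          proof (cases "x i \<le> \<xi>")
            case True
            hence "\<not> y i \<le> \<xi>" using xy(5) unfolding separates_def by auto
            thus ?thesis using det_ord[OF epos epsN N_def cS vp i xy(1,2,3,4) True _ Fbig H] by simp
          next
            case False
            hence "y i \<le> \<xi>" using xy(5) unfolding separates_def by auto
            thus ?thesis using det_ord[OF epos epsN N_def cS vp i xy(2,1,4,3) _ False Fbig H] by simp
          qed
        qed
      qed
    qed
  qed
  have badS: "bad e \<subseteq> S" for e unfolding bad_def by (auto split: prod.splits)
  have badc: "real (card (bad e)) \<le> exp (- sqrt (real k) / (10 * (real N + 1))) * real (card S)"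
    if e: "e \<in> Idx" for e
  proof -
    obtain Q i v where eq: "e = (Q, i, v)" by (cases e) auto
    have i: "i < d" and v: "v \<le> N" using e unfolding eq Idx_def by auto
    show ?thesis unfolding eq bad_def S_def N_def
      using core[OF epos i v[unfolded N_def] Aok_upd[of d eps Q i], where s="sqrt (real k)" and k=k] by simp
  qed
  have cardAlph: "card Alph \<le> k"
  proof -
    have "card ((\<lambda>m. real_of_int m * eps) ` {-2..int N + 1}) \<le> card {-2..int N + 1}"
      by (rule card_image_le) simp
    also have "\<dots> = N + 4" by simp
    finally have ci: "card ((\<lambda>m. real_of_int m * eps) ` {-2..int N + 1}) \<le> N + 4" .
    have "card Alph = d * (card ((\<lambda>m. real_of_int m * eps) ` {-2..int N + 1}) * 2)"
      unfolding Alph_def by (simp add: card_cartesian_product)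
    also have "\<dots> \<le> d * ((N + 4) * 2)" using ci by (intro mult_left_mono) auto
    finally show ?thesis using dN by (simp add: algebra_simps)
  qed
  have cardCL: "card CL \<le> (l + 1) * k ^ l"
  proof -
    have "card CL = (\<Sum>i\<le>l. card Alph ^ i)" unfolding CL_def by (rule card_lists_length_le[OF finAlph])
    also have "\<dots> \<le> (\<Sum>i\<le>l. k ^ l)"
    proof (rule sum_mono)
      fix i assume "i \<in> {..l}"
      hence "i \<le> l" by simp
      have "card Alph ^ i \<le> k ^ i" using cardAlph by (rule power_mono) simp
      also have "\<dots> \<le> k ^ l" using \<open>i \<le> l\<close> kpos by (intro power_increasing) auto
      finally show "card Alph ^ i \<le> k ^ l" .
    qed
    also have "\<dots> = (l + 1) * k ^ l" by simp
    finally show ?thesis .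
  qed
  have cardIdx: "card Idx \<le> k ^ (l + 3)"
  proof -
    have "card Idx = card CL * (d * (N + 1))" unfolding Idx_def by (simp add: card_cartesian_product)
    also have "\<dots> \<le> ((l + 1) * k ^ l) * (k * k)" using cardCL dk Nk by (intro mult_mono) auto
    also have "\<dots> \<le> (k * k ^ l) * (k * k)" using lk by (intro mult_mono) auto
    also have "\<dots> = k ^ (l + 3)" by (simp add: power_add algebra_simps power3_eq_cube)
    finally show ?thesis .
  qed
  have cardU: "real (card U) \<le> real (card S) / real k"
  proof -
    have "card U \<le> (\<Sum>e\<in>Idx. card (bad e))" unfolding U_def by (rule card_UN_le[OF finIdx])
    hence "real (card U) \<le> (\<Sum>e\<in>Idx. real (card (bad e)))" by (metis of_nat_le_iff of_nat_sum)
    also have "\<dots> \<le> (\<Sum>e\<in>Idx. exp (- sqrt (real k) / (10 * (real N + 1))) * real (card S))"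
      using badc by (intro sum_mono) auto
    also have "\<dots> = real (card Idx) * exp (- sqrt (real k) / (10 * (real N + 1))) * real (card S)" by simp
    also have "\<dots> \<le> real k ^ (l + 3) * exp (- sqrt (real k) / (10 * (real N + 1))) * real (card S)"
      using cardIdx by (intro mult_right_mono) (auto simp del: of_nat_power simp add: of_nat_power[symmetric])
    also have "\<dots> \<le> 1 / real k * real (card S)" using fin_num by (intro mult_right_mono) auto
    finally show ?thesis by simp
  qed
  have US: "U \<subseteq> S" unfolding U_def using badS by blast
  have "real (card (S \<inter> target)) \<ge> real (card (S - U))"
    using SU finS by (intro of_nat_mono card_mono) auto
  moreover have "card (S - U) = card S - card U" using US finS by (simp add: card_Diff_subset finite_subset)
  moreover have "card U \<le> card S" using US finS by (simp add: card_mono)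
  ultimately have "real (card (S \<inter> target)) \<ge> real (card S) - real (card U)" by simp
  hence "real (card (S \<inter> target)) / real (card S) \<ge> (real (card S) - real (card U)) / real (card S)"
    using cSpos by (intro divide_right_mono) auto
  moreover have "(real (card S) - real (card U)) / real (card S) \<ge> 1 - 1 / real k"
  proof -
    have "(real (card S) - real (card U)) / real (card S) = 1 - real (card U) / real (card S)"
      using cSpos by (simp add: field_simps)
    moreover have "real (card U) / real (card S) \<le> 1 / real k"
      using cardU cSpos by (simp add: field_simps)
    ultimately show ?thesis by simp
  qed
  moreover have "measure_pmf.prob (pmf_of_set S) target = real (card (S \<inter> target)) / real (card S)"
    using finS neS by (simp add: measure_pmf_of_set)
  ultimately have "measure_pmf.prob (pmf_of_set S) target \<ge> 1 - 1 / real k" by simp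
  thus ?thesis unfolding S_def target_def .
qed


end
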